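(* Let $n\geq 5$ be an odd prime and $q=2^f$ for some positive integer $f$. If $P_q^n=\{r\}$, then $r\geq 4nf+1$.
   Context: For integers $x\geq 2$ and $m\geq 1$, $P_x^m$ denotes the set of primitive prime divisors of $x^m-1$, i.e. primes dividing $x^m-1$ but not dividing $x^i-1$ for any $1\leq i<m$. *)

theory Defs
  imports "HOL-Computational_Algebra.Primes"
begin

definition ppd :: "nat \<Rightarrow> nat \<Rightarrow> nat set" where
  "ppd x m = {p. prime p \<and> p dvd (x ^ m - 1) \<and> (\<forall>i. 1 \<le> i \<and> i < m \<longrightarrow> \<not> p dvd (x ^ i - 1))}"

end

theory Submission
  imports Defs "HOL-Number_Theory.Number_Theory"
begin

lemma geo_nat: "((x::nat) - 1) * (\<Sum>i<m. x^i) = x^m - 1"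
proof (cases "x = 0")
  case True thus ?thesis by (cases m) auto
next
  case False
  have "int ((x - 1) * (\<Sum>i<m. x^i)) = (int x - 1) * (\<Sum>i<m. int x ^ i)"
    using False by (simp add: of_nat_diff)
  also have "\<dots> = int x ^ m - 1" by (simp add: power_diff_1_eq)
  also have "\<dots> = int (x^m - 1)" using False by (simp add: of_nat_diff)
  finally show ?thesis by linarith
qed

lemma dvd_pm1_cong: "(x::nat) \<ge> 1 \<Longrightarrow> (s dvd x^a - 1) \<longleftrightarrow> [x^a = 1] (mod s)"
  by (simp add: cong_altdef_nat)

lemma dvd_pm1_gcd:
  assumes "(x::nat) \<ge> 1" "s dvd x^a - 1" "s dvd x^b - 1"
  shows "s dvd x^(gcd a b) - 1"
proof -
  have "[x^a = 1] (mod s)" "[x^b = 1] (mod s)" using assms dvd_pm1_cong by auto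
  hence "ord s x dvd a" "ord s x dvd b" using ord_divides by auto
  hence "ord s x dvd gcd a b" by simp
  hence "[x^(gcd a b) = 1] (mod s)" using ord_divides by auto
  thus ?thesis using assms(1) dvd_pm1_cong by auto
qed

lemma dvd_pm1_mono:
  assumes "a dvd b" shows "((x::nat)^a - 1) dvd (x^b - 1)"
proof -
  obtain k where "b = a * k" using assms by auto
  hence "x^b - 1 = (x^a)^k - 1" by (simp add: power_mult)
  also have "\<dots> = (x^a - 1) * (\<Sum>i<k. (x^a)^i)" using geo_nat[of "x^a" k] by simp
  finally show ?thesis by simp
qed

lemma geo_cong:
  assumes "(x::nat) \<ge> 1" "s dvd x - 1"
  shows "[(\<Sum>i<m. x^i) = m] (mod s)"
proof -
  have "[x = 1] (mod s)" using assms cong_altdef_nat by auto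
  hence "\<And>i. [x^i = 1] (mod s)" using cong_pow by fastforce
  hence "[(\<Sum>i<m. x^i) = (\<Sum>i<m. 1)] (mod s)" by (intro cong_sum) auto
  thus ?thesis by simp
qed

lemma geo_ge: "(x::nat) \<ge> 1 \<Longrightarrow> m \<ge> 1 \<Longrightarrow> x^(m-1) \<le> (\<Sum>i<m. x^i)"
  by (rule member_le_sum) auto

lemma small_le:
  assumes "prime (n::nat)" "M > 0" "\<And>s. prime s \<Longrightarrow> s dvd M \<Longrightarrow> s = n" "\<not> n^2 dvd M"
  shows "M = 1 \<or> M = n"
proof (cases "M = 1")
  case False
  then obtain s where "prime s" "s dvd M" using prime_factor_nat by blast
  hence "n dvd M" using assms by auto
  then obtain k where k: "M = n * k" by auto
  have "k = 1"
  proof (rule ccontr)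
    assume "k \<noteq> 1"
    then obtain t where "prime t" "t dvd k" using prime_factor_nat by blast
    hence "t dvd M" using k by auto
    hence "t = n" using assms \<open>prime t\<close> by auto
    hence "n^2 dvd M" using k \<open>t dvd k\<close> by (auto simp: power2_eq_square)
    thus False using assms by auto
  qed
  thus ?thesis using k by auto
qed auto

lemma pow_cong_lin: "[(1 + w::int)^i = 1 + int i * w] (mod w^2)"
proof (induction i)
  case 0 thus ?case by simp
next
  case (Suc i)
  have "[(1 + w)^Suc i = (1 + int i * w) * (1 + w)] (mod w^2)"
    using cong_mult[OF Suc.IH cong_refl[of "1 + w"]] by (simp add: mult.commute)
  moreover have "(1 + int i * w) * (1 + w) = (1 + int (Suc i) * w) + int i * w^2"
    by (simp add: algebra_simps power2_eq_square)
  moreover have "[(1 + int (Suc i) * w) + int i * w^2 = 1 + int (Suc i) * w] (mod w^2)"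
    by (simp add: cong_iff_dvd_diff)
  ultimately show ?case using cong_trans by metis
qed

lemma sq_not_dvd_int:
  assumes "prime (p::nat)" "odd p" "int p dvd w"
  shows "\<not> (int p)^2 dvd (\<Sum>i<p. (1 + w)^i)"
proof
  assume H: "(int p)^2 dvd (\<Sum>i<p. (1 + w)^i)"
  have c1: "[(\<Sum>i<p. (1 + w)^i) = (\<Sum>i<p. 1 + int i * w)] (mod w^2)"
    by (intro cong_sum pow_cong_lin)
  have "(int p)^2 dvd w^2" using assms by auto
  hence c2: "[(\<Sum>i<p. (1 + w)^i) = (\<Sum>i<p. 1 + int i * w)] (mod (int p)^2)"
    using c1 cong_dvd_modulus by blast
  obtain u where u: "w = int p * u" using assms by auto
  have "(\<Sum>i<p. 1 + int i * w) = int p + w * (\<Sum>i<p. int i)"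
    by (simp add: sum.distrib sum_distrib_left mult.commute)
  moreover have "2 * (\<Sum>i<p. int i) = int p * (int p - 1)"
  proof -
    have "(\<Sum>i<p. i) = p * (p - 1) div 2" using Sum_Ico_nat[of 0 p] by (simp add: lessThan_atLeast0)
    moreover have "even (p * (p - 1))" by (cases "even p") auto
    ultimately have "2 * (\<Sum>i<p. i) = p * (p - 1)" by simp
    hence "int (2 * (\<Sum>i<p. i)) = int (p * (p - 1))" by simp
    moreover have "int (p - 1) = int p - 1" using prime_gt_0_nat[OF assms(1)] by simp
    ultimately show ?thesis by simp
  qed
  moreover obtain t where t: "p - 1 = 2 * t" using assms(2) by (metis dvd_def odd_two_times_div_two_nat prime_gt_0_nat assms(1) diff_Suc_1 )
  moreover have "int p - 1 = 2 * int t" using t prime_gt_0_nat[OF assms(1)] by linarith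
  ultimately have "2 * (\<Sum>i<p. int i) = 2 * (int p * int t)" by simp
  hence "(\<Sum>i<p. int i) = int p * int t" by linarith
  hence "(\<Sum>i<p. 1 + int i * w) = int p + w * (int p * int t)"
    using \<open>(\<Sum>i<p. 1 + int i * w) = int p + w * (\<Sum>i<p. int i)\<close> by simp
  hence "(\<Sum>i<p. 1 + int i * w) = int p + (int p)^2 * (u * int t)"
    using u by (simp add: algebra_simps power2_eq_square)
  hence "[(\<Sum>i<p. 1 + int i * w) = int p] (mod (int p)^2)"
    by (simp add: cong_iff_dvd_diff)
  hence "[(\<Sum>i<p. (1 + w)^i) = int p] (mod (int p)^2)" using c2 cong_trans by blast
  hence "(int p)^2 dvd int p" using H by (meson cong_dvd_iff)
  hence "int p * int p dvd int p * 1" by (simp add: power2_eq_square)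
  hence "int p dvd 1" using assms(1) prime_gt_0_nat by (subst (asm) dvd_mult_cancel_left) auto
  thus False using assms(1) by (simp add: prime_gt_1_nat)
qed

lemma sq_not_dvd:
  assumes "prime (p::nat)" "odd p" "(x::nat) \<ge> 1" "p dvd x - 1"
  shows "\<not> p^2 dvd (\<Sum>i<p. x^i)"
proof
  assume H: "p^2 dvd (\<Sum>i<p. x^i)"
  define w where "w = int x - 1"
  have "int x = 1 + w" using w_def by simp
  have "int p dvd w" using assms w_def by (metis int_dvd_int_iff of_nat_1 of_nat_diff)
  hence "\<not> (int p)^2 dvd (\<Sum>i<p. (1 + w)^i)" using sq_not_dvd_int assms by blast
  moreover have "(int p)^2 dvd (\<Sum>i<p. (1 + w)^i)"
  proof -
    have "int (p^2) dvd int (\<Sum>i<p. x^i)" using H by (simp only: int_dvd_int_iff)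
    moreover have "int (\<Sum>i<p. x^i) = (\<Sum>i<p. (int x)^i)" by simp
    ultimately have "(int p)^2 dvd (\<Sum>i<p. (int x)^i)" by simp
    thus ?thesis using \<open>int x = 1 + w\<close> by simp
  qed
  ultimately show False by blast
qed

lemma geo_parity: "odd (x::nat) \<Longrightarrow> odd (\<Sum>i<a. x^i) \<longleftrightarrow> odd a"
  by (induction a) auto

lemma two_pow_dvd_odd_factor:
  assumes "(2::nat)^k dvd A * S" "odd S" shows "2^k dvd A"
proof -
  have "coprime ((2::nat)^k) S" using assms(2) by simp
  thus ?thesis using assms(1) coprime_dvd_mult_left_iff by blast
qed

lemma sq_minus_one: "(z::nat)^2 - 1 = (z - 1) * (z + 1)"
  by (cases z) (auto simp: algebra_simps power2_eq_square)

lemma lte2_aux: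
  assumes "(y::nat) mod 4 = 1"
  shows "2^k dvd y^b - 1 \<Longrightarrow> 2^k dvd (y - 1) * b"
proof (induction b arbitrary: k rule: less_induct)
  case (less b)
  show ?case
  proof (cases "odd b")
    case True
    have "y^b - 1 = (y - 1) * (\<Sum>i<b. y^i)" using geo_nat[of y b] by simp
    moreover have "odd y" using assms by presburger
    hence "odd (\<Sum>i<b. y^i)" using True geo_parity by blast
    ultimately have "2^k dvd y - 1" using less.prems two_pow_dvd_odd_factor by metis
    thus ?thesis by simp
  next
    case False
    then obtain c where c: "b = 2 * c" by blast
    show ?thesis
    proof (cases "c = 0 \<or> k = 0")
      case True thus ?thesis using c by auto
    next
      case False
      have "y^b - 1 = (y^c)^2 - 1" using c by (simp add: power_mult mult.commute)
      also have "\<dots> = (y^c - 1) * (y^c + 1)" by (rule sq_minus_one)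
      finally have e1: "y^b - 1 = (y^c - 1) * (y^c + 1)" .
      have "[y = 1] (mod 4)" using assms by (simp add: cong_def)
      hence "[y^c = 1^c] (mod 4)" by (rule cong_pow)
      hence "[y^c = 1] (mod 4)" by simp
      hence "(y^c) mod 4 = 1" by (simp add: cong_def)
      hence "(y^c + 1) mod 4 = 2" by presburger
      moreover define z where "z = y^c + 1"
      ultimately have zm: "z mod 4 = 2" by simp
      define t where "t = z div 2"
      have t: "y^c + 1 = 2 * t" "odd t" using zm unfolding t_def z_def[symmetric] by presburger+
      obtain k' where k': "k = Suc k'" using False by (cases k) auto
      have "y^b - 1 = (y^c - 1) * (2 * t)" using e1 t(1) by (simp only:)
      hence "y^b - 1 = 2 * ((y^c - 1) * t)" by (simp only: mult.assoc mult.left_commute)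
      hence "2 * 2^k' dvd 2 * ((y^c - 1) * t)" using less.prems k' by simp
      hence "2^k' dvd (y^c - 1) * t" by simp
      hence "2^k' dvd y^c - 1" using t(2) two_pow_dvd_odd_factor by blast
      hence "2^k' dvd (y - 1) * c" using less.IH[of c k'] c False by simp
      hence A: "2 * 2^k' dvd 2 * ((y - 1) * c)" by simp
      have B: "2 * ((y - 1) * c) = (y - 1) * b" using c by simp
      have C: "(2::nat)^k = 2 * 2^k'" using k' by simp
      show ?thesis unfolding C B[symmetric] using A .
    qed
  qed
qed

lemma lte2:
  assumes "odd (x::nat)" "2^k dvd x^a - 1"
  shows "2^k dvd (x^2 - 1) * a"
proof (cases "odd a")
  case True
  have "x^a - 1 = (x - 1) * (\<Sum>i<a. x^i)" using geo_nat[of x a] by simp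
  moreover have "odd (\<Sum>i<a. x^i)" using True assms geo_parity by blast
  ultimately have "2^k dvd x - 1" using assms two_pow_dvd_odd_factor by metis
  moreover have "x - 1 dvd (x^2 - 1) * a"
    using dvd_pm1_mono[of 1 2 x] by simp
  ultimately show ?thesis by (rule dvd_trans)
next
  case False
  then obtain b where b: "a = 2 * b" by blast
  obtain m where m: "x = 2 * m + 1" using assms(1) oddE by blast
  have "x^2 = 4 * (m * m + m) + 1" using m by (simp add: algebra_simps power2_eq_square)
  hence "(x^2) mod 4 = 1" by simp
  moreover have "2^k dvd (x^2)^b - 1" using assms b by (simp add: power_mult)
  ultimately have "2^k dvd (x^2 - 1) * b" using lte2_aux by blast
  thus ?thesis using b by (metis dvd_mult mult.left_commute)
qed

lemma numA: "5 \<le> (n::nat) \<Longrightarrow> 2 * n < 2^(n-1)"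
proof (induction n rule: nat_induct_at_least)
  case base thus ?case by simp
next
  case (Suc n)
  have "2^(Suc n - 1) = 2 * (2::nat)^(n-1)" using Suc by (cases n) auto
  thus ?case using Suc by simp
qed

lemma pow_ge_self: "(p::nat) \<le> 2^(p-1)"
proof (induction p)
  case (Suc p) thus ?case by (cases p) auto
qed simp

lemma numB: assumes "5 \<le> (n::nat)" "3 \<le> p" shows "2 * p * n < 2^((p-1)*(n-1))"
proof -
  have "(p-1) + (n-1) \<le> (p-1)*(n-1)"
  proof -
    have "p - 1 = (p - 3) + 2" "n - 1 = (n - 3) + 2" using assms by arith+
    thus ?thesis by (simp add: algebra_simps)
  qed
  hence "(2::nat)^((p-1) + (n-1)) \<le> 2^((p-1)*(n-1))" by (rule power_increasing) simp
  moreover have "p * (2 * n) < 2^(p-1) * 2^(n-1)"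
    using pow_ge_self[of p] numA[OF assms(1)] assms by (intro mult_le_less_imp_less) auto
  ultimately show ?thesis by (simp add: power_add mult.assoc mult.left_commute)
qed

lemma numC: "25 \<le> (f::nat) \<Longrightarrow> 8 * f^6 < 875 * 2^f"
proof (induction f rule: nat_induct_at_least)
  case base thus ?case by simp
next
  case (Suc f)
  have "(Suc f)^6 \<le> 2 * f^6"
  proof -
    have "25 * Suc f \<le> 26 * f" using Suc by simp
    hence "(25 * Suc f)^6 \<le> (26 * f)^6" by (rule power_mono) simp
    hence "25^6 * (Suc f)^6 \<le> 26^6 * f^6" by (simp only: power_mult_distrib)
    moreover have "(26::nat)^6 * f^6 \<le> 25^6 * (2 * f^6)" by simp
    ultimately have "25^6 * (Suc f)^6 \<le> 25^6 * (2 * f^6)" by linarith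
    thus ?thesis by simp
  qed
  thus ?case using Suc by simp
qed

lemma numD: "5 \<le> (n::nat) \<Longrightarrow> 2 * n + 2 < 2^n"
  using numA[of n] by (cases n) auto

lemma fermat2: assumes "prime (n::nat)" shows "[x^n = x] (mod n)"
proof (cases "n dvd x")
  case True
  hence "[x = 0] (mod n)" by (simp add: cong_0_iff)
  moreover have "n dvd x^n" using True assms prime_gt_0_nat by (metis dvd_power dvd_trans)
  hence "[x^n = 0] (mod n)" by (simp add: cong_0_iff)
  ultimately show ?thesis by (meson cong_sym cong_trans)
next
  case False
  have "[x^(n-1) = 1] (mod n)" using fermat_theorem[OF assms False] .
  hence "[x^(n-1) * x = 1 * x] (mod n)" using cong_mult cong_refl by blast
  moreover have "x^(n-1) * x = x^n" using assms prime_gt_0_nat[OF assms]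
    by (simp add: power_Suc2[symmetric])
  ultimately show ?thesis by simp
qed

lemma fermat_iter: assumes "prime (n::nat)" shows "[x^(n^j) = x] (mod n)"
proof (induction j)
  case 0 thus ?case by simp
next
  case (Suc j)
  have "x^(n^Suc j) = (x^(n^j))^n" by (simp add: power_mult[symmetric] mult.commute)
  moreover have "[(x^(n^j))^n = x^(n^j)] (mod n)" by (rule fermat2[OF assms])
  ultimately show ?case using Suc cong_trans by metis
qed

lemma odd_sq_mod4: "odd (x::nat) \<Longrightarrow> x^2 mod 4 = 1"
proof -
  assume "odd x"
  then obtain m where m: "x = 2 * m + 1" using oddE by blast
  have "x^2 = 4 * (m * m + m) + 1" using m by (simp add: algebra_simps power2_eq_square)
  thus ?thesis by simp
qed

lemma odd_pow_plus1: assumes "odd a" shows "((x::nat) + 1) dvd x^a + 1"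
proof -
  have "[int x = -1] (mod (int x + 1))" by (simp add: cong_iff_dvd_diff)
  hence "[(int x)^a = (-1)^a] (mod (int x + 1))" by (rule cong_pow)
  hence "[(int x)^a = -1] (mod (int x + 1))" using assms by simp
  hence "(int x + 1) dvd (int x)^a + 1" by (simp add: cong_iff_dvd_diff)
  hence "int (x + 1) dvd int (x^a + 1)" by (simp add: add.commute)
  thus ?thesis by (simp only: int_dvd_int_iff)
qed

lemma geo_split: "(\<Sum>i<Suc m. (x::nat)^i) = 1 + x * (\<Sum>i<m. x^i)"
  by (simp only: sum.lessThan_Suc_shift sum_distrib_left power_Suc power_0)

theorem lemma2p11:
  fixes n f r :: nat
  assumes "prime n" and "n \<ge> 5" and "odd n" and "f \<ge> 1"
    and "ppd (2 ^ f) n = {r}"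
  shows "r \<ge> 4 * n * f + 1"
proof -
  define q :: nat where "q = 2^f"
  define Nq where "Nq = (\<Sum>i<n. q^i)"
  have q2: "q \<ge> 2" unfolding q_def using power_increasing[OF assms(4), of "2::nat"] by simp
  have qeven: "even q" using assms(4) unfolding q_def by simp
  have rppd: "r \<in> ppd q n" using assms(5) q_def by simp
  hence rprime: "prime r" and rdvd: "r dvd q^n - 1"
    and rnot: "\<And>i. 1 \<le> i \<Longrightarrow> i < n \<Longrightarrow> \<not> r dvd q^i - 1"
    unfolding ppd_def by auto
  have rq1: "\<not> r dvd q - 1" using rnot[of 1] assms(2) by simp
  have F2: "s = r" if "prime s" "s dvd q^n - 1" "\<not> s dvd q - 1" for s
  proof -
    have "\<not> s dvd q^i - 1" if "1 \<le> i" "i < n" for i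
    proof
      assume "s dvd q^i - 1"
      have q1: "q \<ge> 1" using q2 by simp
      have "s dvd q^(gcd i n) - 1" using dvd_pm1_gcd[OF q1 \<open>s dvd q^i - 1\<close> \<open>s dvd q^n - 1\<close>] .
      moreover have "\<not> n dvd i"
      proof
        assume "n dvd i"
        hence "n \<le> i" using dvd_imp_le that(1) by simp
        thus False using that(2) by simp
      qed
      hence "coprime n i" using assms(1) by (intro prime_imp_coprime)
      hence "coprime i n" using coprime_commute by blast
      hence "gcd i n = 1" by (simp only: coprime_iff_gcd_eq_1)
      ultimately show False using \<open>\<not> s dvd q - 1\<close> by simp
    qed
    hence "s \<in> ppd q n" unfolding ppd_def using that by auto
    thus ?thesis using assms(5) q_def by simp
  qed
  have geoq: "(q - 1) * Nq = q^n - 1" unfolding Nq_def by (rule geo_nat)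
  have Nqpos: "Nq > 0"
  proof -
    have "q^(n-1) \<le> Nq" using geo_ge[of q n] q2 assms(2) unfolding Nq_def by simp
    moreover have "q^(n-1) > 0" using q2 by simp
    ultimately show ?thesis by linarith
  qed
  have rodd: "odd r"
  proof
    assume "even r"
    hence "2 dvd q^n - 1" using rdvd by (rule dvd_trans)
    moreover have "even (q^n)" using qeven assms(2) by simp
    moreover have "q^n \<ge> 1" using q2 by simp
    ultimately show False by presburger
  qed
  have r3: "r \<ge> 3" using rodd rprime prime_ge_2_nat[OF rprime] by presburger
  have rNq: "r dvd Nq" using rdvd rq1 geoq rprime by (metis prime_dvd_mult_iff)
  have F3: "s = n \<or> s = r" if "prime s" "s dvd Nq" for s
  proof (cases "s dvd q - 1")
    case True
    hence "[Nq = n] (mod s)" unfolding Nq_def using geo_cong q2 by simp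
    hence "s dvd n" using that(2) by (simp add: cong_dvd_iff)
    thus ?thesis using that(1) assms(1) primes_dvd_imp_eq by blast
  next
    case False
    have "s dvd q^n - 1" using that(2) geoq by (metis dvd_mult_left dvd_trans dvd_triv_right)
    thus ?thesis using F2 that False by blast
  qed
  have F4a: "n dvd q - 1" if "n dvd Nq"
  proof -
    have "n dvd q^n - 1" using that geoq by (metis dvd_trans dvd_triv_right)
    hence "[q^n = 1] (mod n)" using q2 by (simp add: cong_altdef_nat)
    moreover have "[q^n = q] (mod n)" by (rule fermat2[OF assms(1)])
    ultimately have "[q = 1] (mod n)" by (meson cong_sym cong_trans)
    thus ?thesis using q2 by (simp add: cong_altdef_nat)
  qed
  have F4b: "\<not> n^2 dvd Nq"
  proof
    assume "n^2 dvd Nq"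
    hence "n dvd Nq" by (metis dvd_mult_left power2_eq_square)
    hence "n dvd q - 1" by (rule F4a)
    thus False using sq_not_dvd[OF assms(1) assms(3), of q] q2 \<open>n^2 dvd Nq\<close> unfolding Nq_def by simp
  qed
  define a where "a = multiplicity r Nq"
  have Nq0: "Nq \<noteq> 0" and runit: "\<not> is_unit r" using Nqpos rprime by (auto simp: prime_gt_1_nat)
  then obtain M where M: "Nq = r^a * M" "\<not> r dvd M" unfolding a_def by (rule multiplicity_decompose')
  have Mpos: "M > 0" using M Nqpos by (cases "M = 0") auto
  have Mfac: "s = n" if "prime s" "s dvd M" for s
    using F3[OF that(1)] that M by (metis dvd_mult dvd_mult_left)
  have Mn2: "\<not> n^2 dvd M" using F4b M by (metis dvd_mult dvd_trans dvd_triv_right)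
  have M1n: "M = 1 \<or> M = n" using small_le[OF assms(1) Mpos Mfac Mn2] by blast
  have a1: "a \<ge> 1" using rNq a_def Nq0 prime_multiplicity_gt_zero_iff[of r Nq] rprime by simp
  have caseA: False if pprime: "prime p" and pf: "p dvd f" and pn: "p \<noteq> n" for p
  proof -
    obtain g where fg: "f = p * g" using pf by auto
    have g1: "g \<ge> 1" using fg assms(4) by (cases g) auto
    have p2: "p \<ge> 2" using prime_ge_2_nat[OF pprime] .
    define u :: nat where "u = 2^g"
    have u2: "u \<ge> 2" unfolding u_def using power_increasing[OF g1, of "2::nat"] by simp
    have u1: "u \<ge> 1" using u2 by simp
    have qu: "q = u^p" unfolding q_def u_def fg by (simp add: power_mult mult.commute)
    define Z where "Z = u^n"
    have Z1: "Z \<ge> 1" unfolding Z_def using u1 by simp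
    define C where "C = (\<Sum>i<p. Z^i)"
    define D where "D = (\<Sum>i<p. u^i)"
    define Ng where "Ng = (\<Sum>i<n. u^i)"
    have eNg: "(u - 1) * Ng = Z - 1" unfolding Ng_def Z_def by (rule geo_nat)
    have eC: "(Z - 1) * C = Z^p - 1" unfolding C_def by (rule geo_nat)
    have eD: "(u - 1) * D = q - 1" unfolding D_def qu by (rule geo_nat)
    have Zp: "Z^p = q^n" unfolding Z_def qu by (simp add: power_mult[symmetric] mult.commute)
    have ident: "C * Ng = Nq * D"
    proof -
      have "(u - 1) * (u - 1) * (C * Ng) = (u - 1) * (((u - 1) * Ng) * C)"
        by (simp only: mult_ac)
      also have "\<dots> = (u - 1) * ((Z - 1) * C)" by (simp only: eNg)
      also have "\<dots> = (u - 1) * (q^n - 1)" using eC Zp by simp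
      also have "\<dots> = (u - 1) * ((q - 1) * Nq)" using geoq by simp
      also have "\<dots> = (u - 1) * (((u - 1) * D) * Nq)" by (simp only: eD)
      also have "\<dots> = (u - 1) * (u - 1) * (Nq * D)" by (simp only: mult_ac)
      finally have "(u - 1) * (u - 1) * (C * Ng) = (u - 1) * (u - 1) * (Nq * D)" .
      moreover have "(u - 1) * (u - 1) > 0" using u2 by simp
      ultimately show ?thesis by simp
    qed
    have Ngpos: "Ng > 0"
    proof -
      have "u^(n-1) \<le> Ng" using geo_ge[of u n] u1 assms(2) unfolding Ng_def by simp
      moreover have "u^(n-1) > 0" using u2 by simp
      ultimately show ?thesis by linarith
    qed
    have Ngge: "2^(n-1) \<le> Ng"
    proof -
      have "u^(n-1) \<le> Ng" using geo_ge[of u n] u1 assms(2) unfolding Ng_def by simp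
      moreover have "(2::nat)^(n-1) \<le> u^(n-1)" using u2 by (simp add: power_mono)
      ultimately show ?thesis by linarith
    qed
    have Cpos: "C > 0"
    proof -
      have "Z^(p-1) \<le> C" using geo_ge[of Z p] Z1 p2 unfolding C_def by simp
      moreover have "Z^(p-1) > 0" using Z1 by simp
      ultimately show ?thesis by linarith
    qed
    have cop: "coprime p n" using pprime assms(1) pn by (simp add: primes_coprime)
    show False
    proof (cases "r dvd Z - 1")
      case False
      have Ngfac: "s = n" if sprime: "prime s" and sdvd: "s dvd Ng" for s
      proof -
        have sZ: "s dvd Z - 1" using sdvd eNg by (metis dvd_trans dvd_triv_right)
        have "s dvd u - 1"
        proof (rule ccontr)
          assume nsu: "\<not> s dvd u - 1"
          have "Z - 1 dvd q^n - 1" unfolding Z_def qu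
            using dvd_pm1_mono[of n "p * n" u] by (simp add: power_mult)
          hence sqn: "s dvd q^n - 1" using sZ by (rule dvd_trans[rotated])
          have "\<not> s dvd q - 1"
          proof
            assume "s dvd q - 1"
            hence "s dvd u^p - 1" using qu by simp
            moreover have "s dvd u^n - 1" using sZ Z_def by simp
            ultimately have "s dvd u^(gcd p n) - 1" using dvd_pm1_gcd[OF u1] by blast
            moreover have "gcd p n = 1" using cop by (simp only: coprime_iff_gcd_eq_1)
            ultimately show False using nsu by simp
          qed
          hence "s = r" using F2 sprime sqn by blast
          thus False using sZ \<open>\<not> r dvd Z - 1\<close> by simp
        qed
        hence "[Ng = n] (mod s)" unfolding Ng_def using geo_cong u1 by simp
        hence "s dvd n" using sdvd by (simp add: cong_dvd_iff)
        thus ?thesis using sprime assms(1) primes_dvd_imp_eq by blast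
      qed
      have "\<not> n^2 dvd Ng"
      proof
        assume H: "n^2 dvd Ng"
        hence "n dvd Ng" using dvd_trans[of n "n^2" Ng] by (simp add: power2_eq_square)
        have "n dvd u - 1"
        proof (rule ccontr)
          assume nu: "\<not> n dvd u - 1"
          (* n is a prime factor of Ng, and such factors divide u - 1 *)
          have "n dvd Z - 1" using \<open>n dvd Ng\<close> eNg by (metis dvd_trans dvd_triv_right)
          have "Z - 1 dvd q^n - 1" unfolding Z_def qu
            using dvd_pm1_mono[of n "p * n" u] by (simp add: power_mult)
          hence nqn: "n dvd q^n - 1" using \<open>n dvd Z - 1\<close> by (rule dvd_trans[rotated])
          have "\<not> n dvd q - 1"
          proof
            assume "n dvd q - 1"
            hence "n dvd u^p - 1" using qu by simp
            moreover have "n dvd u^n - 1" using \<open>n dvd Z - 1\<close> Z_def by simp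
            ultimately have "n dvd u^(gcd p n) - 1" using dvd_pm1_gcd[OF u1] by blast
            moreover have "gcd p n = 1" using cop by (simp only: coprime_iff_gcd_eq_1)
            ultimately show False using nu by simp
          qed
          hence "n = r" using F2 assms(1) nqn by blast
          thus False using \<open>n dvd Z - 1\<close> \<open>\<not> r dvd Z - 1\<close> by simp
        qed
        thus False using sq_not_dvd[OF assms(1) assms(3) u1] H unfolding Ng_def by simp
      qed
      hence "Ng = 1 \<or> Ng = n" using small_le[OF assms(1) Ngpos Ngfac] by blast
      hence "Ng \<le> n" using assms(2) by auto
      moreover have "2 * n < 2^(n-1)" using numA[OF assms(2)] .
      ultimately show False using Ngge by linarith
    next
      case True
      have Ccong: "[C = p] (mod r)" unfolding C_def using geo_cong[OF Z1 True] .
      define mC where "mC = multiplicity r C"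
      have C0: "C \<noteq> 0" using Cpos by simp
      have Ng0: "Ng \<noteq> 0" using Ngpos by simp
      have mC1: "mC = 0 \<or> (mC = 1 \<and> r = p)"
      proof (cases "mC = 0")
        case False
        hence "r dvd C" using prime_multiplicity_gt_zero_iff[of r C] rprime C0 mC_def by simp
        hence "r dvd p" using Ccong by (simp add: cong_dvd_iff)
        hence rp: "r = p" using rprime pprime primes_dvd_imp_eq by blast
        have "\<not> 2 \<le> mC"
        proof
          assume "2 \<le> mC"
          hence "r^2 dvd C" using multiplicity_dvd'[of 2 r C] mC_def by simp
          thus False using sq_not_dvd[OF rprime rodd Z1] True rp unfolding C_def by simp
        qed
        thus ?thesis using False rp by simp
      qed simp
      have "a \<le> multiplicity r (C * Ng)"
      proof -
        have "Nq dvd C * Ng" using ident by simp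
        moreover have "C * Ng \<noteq> 0" using C0 Ng0 by simp
        ultimately show ?thesis unfolding a_def by (rule dvd_imp_multiplicity_le)
      qed
      also have "multiplicity r (C * Ng) = mC + multiplicity r Ng"
        unfolding mC_def using prime_elem_multiplicity_mult_distrib[of r C Ng] rprime C0 Ng0 by simp
      finally have "r^a dvd r^mC * r^(multiplicity r Ng)" by (simp add: power_add[symmetric] le_imp_power_dvd)
      moreover have "r^(multiplicity r Ng) dvd Ng" by (rule multiplicity_dvd)
      ultimately have "r^a dvd r^mC * Ng" by (meson dvd_trans mult_dvd_mono dvd_refl)
      hence raleq: "r^a \<le> r^mC * Ng" using Ngpos rprime prime_gt_0_nat by (intro dvd_imp_le) auto
      define e where "e = r^mC"
      have e_cases: "e = 1 \<or> (e = p \<and> p \<ge> 3)" using mC1 e_def r3 by auto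
      have "Nq \<le> e * Ng * n"
      proof -
        have "Nq = r^a * M" using M by simp
        also have "\<dots> \<le> (e * Ng) * n" using raleq M1n e_def assms(2) by (intro mult_le_mono) auto
        finally show ?thesis by simp
      qed
      have low: "2^(f*(n-1)) \<le> Nq"
      proof -
        have "q^(n-1) \<le> Nq" using geo_ge[of q n] q2 assms(2) unfolding Nq_def by simp
        thus ?thesis unfolding q_def by (simp add: power_mult)
      qed
      have upNg: "Ng * u < 2 * 2^(g*n)"
      proof -
        have "u \<le> 2 * (u - 1)" using u2 by linarith
        hence "Ng * u \<le> Ng * (2 * (u - 1))" by (rule mult_le_mono2)
        also have "\<dots> = 2 * (Z - 1)" using eNg by (simp add: algebra_simps)
        also have "\<dots> < 2 * Z" using Z1 by simp
        also have "Z = 2^(g*n)" unfolding Z_def u_def by (simp add: power_mult)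
        finally show ?thesis .
      qed
      have "2^(f*(n-1)) * u < 2 * e * n * 2^(g*n)"
      proof -
        have "2^(f*(n-1)) * u \<le> (e * Ng * n) * u" using low \<open>Nq \<le> e * Ng * n\<close> by simp
        also have "\<dots> = e * n * (Ng * u)" by (simp add: algebra_simps)
        also have "\<dots> < e * n * (2 * 2^(g*n))" using upNg e_cases assms(2) p2 by (intro mult_strict_left_mono) auto
        finally show ?thesis by (simp add: algebra_simps)
      qed
      moreover have "2^(f*(n-1)) * u = 2^(g*n) * 2^((p-1)*g*(n-1))"
      proof -
        have eq: "f*(n-1) + g = g*n + (p-1)*g*(n-1)"
        proof -
          have "p = (p - 1) + 1" "n = (n - 1) + 1" using p2 assms(2) by arith+
          then obtain P K where "p = P + 1" "n = K + 1" by blast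
          thus ?thesis unfolding fg by (simp add: algebra_simps)
        qed
        have "2^(f*(n-1)) * u = 2^(f*(n-1) + g)" unfolding u_def by (simp add: power_add)
        also have "\<dots> = 2^(g*n + (p-1)*g*(n-1))" using eq by (simp only:)
        also have "\<dots> = 2^(g*n) * 2^((p-1)*g*(n-1))" by (simp add: power_add)
        finally show ?thesis .
      qed
      ultimately have "2^(g*n) * 2^((p-1)*g*(n-1)) < (2 * e * n) * 2^(g*n)" by simp
      hence lt: "2^((p-1)*g*(n-1)) < 2 * e * n" by simp
      from e_cases show False
      proof
        assume "e = 1"
        have "1 \<le> p - 1" using p2 by arith
        hence "1 * 1 \<le> (p-1)*g" using g1 by (rule mult_le_mono)
        hence "1 \<le> (p-1)*g" by simp
        hence "1 * (n - 1) \<le> (p-1)*g*(n-1)" by (rule mult_le_mono1)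
        hence "n - 1 \<le> (p-1)*g*(n-1)" by simp
        hence pw: "(2::nat)^(n-1) \<le> 2^((p-1)*g*(n-1))" by (rule power_increasing) simp
        have "2 * e * n = 2 * n" using \<open>e = 1\<close> by simp
        thus False using lt pw numA[OF assms(2)] by linarith
      next
        assume ep: "e = p \<and> p \<ge> 3"
        have "(p-1)*(n-1) \<le> (p-1)*g*(n-1)" using g1 by simp
        hence pw: "(2::nat)^((p-1)*(n-1)) \<le> 2^((p-1)*g*(n-1))" by (rule power_increasing) simp
        have "2 * e * n = 2 * p * n" using ep by simp
        thus False using lt pw ep numB[OF assms(2), of p] by linarith
      qed
    qed
  qed
  have fpow: "\<exists>j. f = n^j"
  proof -
    have f0: "f \<noteq> 0" using assms(4) by simp
    have nu: "\<not> is_unit n" using assms(1) by (auto simp: prime_gt_1_nat)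
    obtain y where y: "f = n^(multiplicity n f) * y" "\<not> n dvd y" using multiplicity_decompose'[OF f0 nu] by blast
    have "y = 1"
    proof (rule ccontr)
      assume "y \<noteq> 1"
      then obtain t where t: "prime t" "t dvd y" using prime_factor_nat by blast
      have "t dvd f" using y(1) t(2) by (metis dvd_mult)
      hence "t = n" using caseA t(1) by blast
      thus False using t(2) y(2) by simp
    qed
    thus ?thesis using y by auto
  qed
  then obtain j where fj: "f = n^j" by blast
  have fodd: "odd f" using fj assms(3) by simp
  have nq1: "\<not> n dvd q - 1"
  proof
    assume "n dvd q - 1"
    hence "[q = 1] (mod n)" using q2 by (simp add: cong_altdef_nat)
    moreover have "[q = 2] (mod n)" unfolding q_def fj by (rule fermat_iter[OF assms(1)])
    ultimately have "[2 = 1] (mod n)" by (meson cong_sym cong_trans)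
    hence "n dvd 1" by (simp add: cong_altdef_nat)
    thus False using assms(2) by simp
  qed
  have "M = 1"
  proof (rule ccontr)
    assume "M \<noteq> 1"
    hence "M = n" using M1n by simp
    hence "n dvd Nq" using M by simp
    thus False using F4a nq1 by blast
  qed
  hence Nqr: "Nq = r^a" using M by simp
  have r2n: "[2^(n*f) = 1] (mod r)"
  proof -
    have "q^n \<ge> 1" using q2 by simp
    hence "[q^n = 1] (mod r)" using rdvd by (simp add: cong_altdef_nat)
    thus ?thesis unfolding q_def by (simp add: power_mult[symmetric] mult.commute)
  qed
  define d where "d = ord r 2"
  have "d dvd n^(Suc j)" using r2n ord_divides[of 2 "n*f" r] fj d_def by simp
  then obtain i where i: "i \<le> Suc j" "d = n^i" using divides_primepow_nat[OF assms(1)] by blast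
  have dnf: "d = n * f"
  proof (rule ccontr)
    assume "d \<noteq> n * f"
    hence "i \<le> j" using i fj by (cases "i = Suc j") auto
    hence "d dvd f" using i fj by (simp add: le_imp_power_dvd)
    hence "[2^f = 1] (mod r)" using ord_divides[of 2 f r] d_def by simp
    hence "r dvd q - 1" unfolding q_def by (simp add: cong_altdef_nat)
    thus False using rq1 by simp
  qed
  have "d dvd r - 1"
  proof -
    have "\<not> r dvd 2" using r3 by (auto dest: dvd_imp_le)
    hence "[2^(r-1) = 1] (mod r)" using fermat_theorem[OF rprime] by blast
    thus ?thesis using ord_divides[of 2 "r-1" r] d_def by simp
  qed
  hence nfr: "n * f dvd r - 1" using dnf by simp
  have "2 dvd r - 1" using rodd r3 by (simp add: dvd_diff_nat)
  moreover have "coprime 2 (n * f)" using assms(3) fodd by simp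
  ultimately have "2 * (n * f) dvd r - 1" using nfr by (simp add: divides_mult)
  then obtain k where k: "r - 1 = 2 * (n * f) * k" by blast
  have k0: "k \<noteq> 0"
  proof
    assume "k = 0"
    hence "r - 1 = 0" using k by simp
    thus False using r3 by simp
  qed
  show ?thesis
  proof (cases "k \<ge> 2")
    case True
    have "4 * n * f \<le> 2 * (n * f) * k" using True by simp
    thus ?thesis using k r3 by linarith
  next
    case False
    hence k1: "k = 1" using k0 by simp
    hence rv: "r = 2 * n * f + 1" using k r3 by simp
    show ?thesis
    proof (cases "j = 0")
      case True
      hence f1: "f = 1" "q = 2" using fj q_def by auto
      have Nq2: "Nq = 2^n - 1" using geoq f1 by simp
      have aodd: "odd a"
      proof
        assume "even a"
        then obtain b where b: "a = 2 * b" by blast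
        have "[r^2 = 1] (mod 4)" using odd_sq_mod4[OF rodd] by (simp add: cong_def)
        hence "[(r^2)^b = 1^b] (mod 4)" by (rule cong_pow)
        hence "(r^a) mod 4 = 1" using b by (simp add: power_mult cong_def)
        moreover have "(2^n - 1) mod 4 = (3::nat)"
        proof -
          have "n = (n - 2) + 2" using assms(2) by arith
          then obtain m where m: "n = m + 2" by blast
          have "(2::nat)^n = 4 * 2^(n-2)" unfolding m by (simp add: power_add)
          moreover have "(2::nat)^(n-2) \<ge> 1" by simp
          ultimately have "(2::nat)^n - 1 = 4 * (2^(n-2) - 1) + 3" by linarith
          thus ?thesis by simp
        qed
        ultimately show False using Nq2 Nqr by simp
      qed
      have "r + 1 dvd r^a + 1" using odd_pow_plus1[OF aodd] .
      moreover have "r^a + 1 = 2^n"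
      proof -
        have "(2::nat)^n \<ge> 1" by simp
        thus ?thesis using Nq2 Nqr by linarith
      qed
      ultimately have "2 * n + 2 dvd 2^n" using rv f1 by simp
      then obtain t where t: "t \<le> n" "2 * n + 2 = 2^t" using divides_primepow_nat[of 2] by auto
      have "t \<noteq> n" using t numD[OF assms(2)] by auto
      hence tn: "t < n" using t by simp
      have t1: "t \<ge> 1" using t by (cases t) auto
      have "r = 2^t - 1" using rv f1 t by simp
      hence "r dvd q^t - 1" using f1 by simp
      thus ?thesis using rnot[OF t1 tn] by simp
    next
      case False
      show ?thesis
      proof (cases "j = 1")
        case True
        hence fn: "f = n" using fj by simp
        have "\<not> 3 dvd n"
        proof
          assume "3 dvd n"
          moreover have "\<forall>m. m dvd n \<longrightarrow> m = 1 \<or> m = n" using conjunct2[OF prime_nat_iff[THEN iffD1, OF assms(1)]] .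
          ultimately have "(3::nat) = 1 \<or> 3 = n" by (elim allE[of _ 3]) auto
          thus False using assms(2) by (elim disjE) linarith+
        qed
        hence "n mod 3 \<noteq> 0" by (simp add: dvd_eq_mod_eq_0)
        moreover have "n mod 3 < 3" by simp
        ultimately have "n mod 3 = 1 \<or> n mod 3 = 2" by linarith
        hence "3 dvd 2 * n * n + 1"
        proof
          assume "n mod 3 = 1"
          moreover have "n = 3 * (n div 3) + n mod 3" by simp
          ultimately have "n = 3 * (n div 3) + 1" by linarith
          then obtain t where "n = 3 * t + 1" by blast
          hence "2 * n * n + 1 = 3 * (6 * t * t + 4 * t + 1)" by (simp add: algebra_simps)
          thus ?thesis by (subst \<open>2 * n * n + 1 = 3 * (6 * t * t + 4 * t + 1)\<close>) (rule dvd_triv_left)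
        next
          assume "n mod 3 = 2"
          moreover have "n = 3 * (n div 3) + n mod 3" by simp
          ultimately have "n = 3 * (n div 3) + 2" by linarith
          then obtain t where "n = 3 * t + 2" by blast
          hence "2 * n * n + 1 = 3 * (6 * t * t + 8 * t + 3)" by (simp add: algebra_simps)
          thus ?thesis by (subst \<open>2 * n * n + 1 = 3 * (6 * t * t + 8 * t + 3)\<close>) (rule dvd_triv_left)
        qed
        hence "3 dvd r" using rv fn by simp
        moreover have "\<forall>m. m dvd r \<longrightarrow> m = 1 \<or> m = r" using conjunct2[OF prime_nat_iff[THEN iffD1, OF rprime]] .
        ultimately have "(3::nat) = 1 \<or> 3 = r" by (elim allE[of _ 3]) auto
        hence "r = 3" by (elim disjE) linarith+
        moreover have "2 * n * n + 1 \<ge> 2 * 5 * 5 + 1" using assms(2) by (intro add_le_mono mult_le_mono) auto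
        moreover have "r = 2 * n * n + 1" using rv fn by simp
        ultimately show ?thesis by linarith
      next
        case False
        hence j2: "j \<ge> 2" using \<open>j \<noteq> 0\<close> by simp
        have fnn: "n * n \<le> f"
        proof -
          have "n^2 dvd n^j" using j2 by (rule le_imp_power_dvd)
          hence "n^2 \<le> f" using fj assms(1) prime_gt_0_nat by (intro dvd_imp_le) auto
          thus ?thesis by (simp add: power2_eq_square)
        qed
        have "5 * n \<le> n * n" using assms(2) by (rule mult_le_mono1)
        hence f5n: "5 * n \<le> f" using fnn by linarith
        have "5 * 5 \<le> n * n" using assms(2) assms(2) by (rule mult_le_mono)
        hence f25: "25 \<le> f" using fnn by linarith
        define X where "X = n * f"
        have rX: "r = 2 * X + 1" using rv X_def by simp
        have "2^f dvd Nq - 1"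
        proof -
          obtain m where m: "n = Suc m" using assms(2) by (cases n) auto
          have "Nq = 1 + q * (\<Sum>i<m. q^i)" unfolding Nq_def m by (rule geo_split)
          thus ?thesis unfolding q_def by simp
        qed
        hence "2^f dvd r^a - 1" using Nqr by simp
        hence "2^f dvd (r^2 - 1) * a" using lte2[OF rodd] by blast
        moreover have "(r^2 - 1) * a > 0"
        proof -
          have "r * r \<ge> 3 * 3" using r3 r3 by (rule mult_le_mono)
          hence "r^2 - 1 > 0" by (simp add: power2_eq_square)
          thus ?thesis using a1 by simp
        qed
        ultimately have A: "2^f \<le> (r^2 - 1) * a" by (rule dvd_imp_le)
        have r2: "r^2 - 1 = 4 * X * (X + 1)" using rX by (simp add: power2_eq_square algebra_simps)
        have r128: "r \<ge> 128"
        proof -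
          have "X \<ge> 5 * 25" unfolding X_def using assms(2) f25 by (intro mult_le_mono) auto
          thus ?thesis using rX by simp
        qed
        have "7 * a < f * n"
        proof -
          have "(2::nat)^(7*a) = 128^a" by (simp add: power_mult)
          also have "\<dots> \<le> r^a" using r128 by (simp add: power_mono)
          also have "\<dots> = Nq" using Nqr by simp
          also have "\<dots> < q^n"
          proof -
            have "1 \<le> q - 1" using q2 by arith
            hence "1 * Nq \<le> (q - 1) * Nq" by (rule mult_le_mono1)
            hence "Nq \<le> (q - 1) * Nq" by simp
            also have "\<dots> = q^n - 1" using geoq .
            also have "\<dots> < q^n" using q2 by simp
            finally show ?thesis .
          qed
          also have "q^n = 2^(f*n)" unfolding q_def by (simp add: power_mult)
          finally show ?thesis by simp
        qed
        hence "7 * 2^f < 4 * X * (X + 1) * (f * n)"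
        proof -
          have "7 * 2^f \<le> 4 * X * (X + 1) * (7 * a)" using A r2 by simp
          also have "\<dots> < 4 * X * (X + 1) * (f * n)" using \<open>7 * a < f * n\<close> X_def assms(2) assms(4)
            by (intro mult_strict_left_mono) auto
          finally show ?thesis .
        qed
        hence B: "125 * (7 * 2^f) < 125 * (4 * X * (X + 1) * X)" using X_def by (simp add: mult.commute)
        have "125 * (4 * X * (X + 1) * X) \<le> 8 * f^6"
        proof -
          have "5 * X \<le> f * f" unfolding X_def using f5n by (simp add: mult_le_mono1)
          have f4: "f^4 = (f * f) * (f * f)"
          proof -
            have "f^4 = f^(2+2)" by simp
            also have "\<dots> = f^2 * f^2" by (rule power_add)
            finally show ?thesis by (simp add: power2_eq_square)
          qed
          have f6: "f^6 = f^4 * (f * f)"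
          proof -
            have "f^6 = f^(4+2)" by simp
            also have "\<dots> = f^4 * f^2" by (rule power_add)
            finally show ?thesis by (simp add: power2_eq_square)
          qed
          have "(5 * X) * (5 * X) \<le> (f * f) * (f * f)" using \<open>5 * X \<le> f * f\<close> \<open>5 * X \<le> f * f\<close> by (rule mult_le_mono)
          hence c1: "25 * (X * X) \<le> f^4" unfolding f4 by (simp add: algebra_simps)
          have "25 * 25 \<le> f * f" using f25 f25 by (rule mult_le_mono)
          moreover have "5 * (X + 1) = 5 * X + 5" by simp
          ultimately have c2: "5 * (X + 1) \<le> 2 * (f * f)" using \<open>5 * X \<le> f * f\<close> by linarith
          have "125 * (4 * X * (X + 1) * X) = 4 * (25 * (X * X)) * (5 * (X + 1))" by (simp add: algebra_simps)
          also have "\<dots> \<le> 4 * f^4 * (2 * (f * f))"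
          proof -
            have "4 * (25 * (X * X)) \<le> 4 * f^4" using c1 by simp
            thus ?thesis using c2 by (rule mult_le_mono)
          qed
          also have "\<dots> = 8 * f^6" unfolding f6 by (simp add: algebra_simps)
          finally show ?thesis .
        qed
        hence "875 * 2^f < 8 * f^6" using B by linarith
        thus ?thesis using numC[OF f25] by simp
      qed
    qed
  qed
qed

end
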